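(* Let $\mathbf{S_2}=(\rho,\sigma,\tau)=\big(1+\frac{-1+i\sqrt3}{2}\cdot\frac{1+\sqrt5}{2},\,1,\,1\big)$. For $p\in\{4,5\}$, the group $\Gamma=\mathcal{T}(p,\mathbf{S_2})$ is generated by $\mathrm{Stab}_\Gamma(m(R_1))\cup\mathrm{Stab}_\Gamma(m(A))$, where $A=(R_1R_2R_3R_2^{-1})^5$.
   Context: Let $p\ge2$ be an integer and $(\rho,\sigma,\tau)\in\mathbb{C}^3$. Set $u=e^{2\pi i/(3p)}$, $\alpha=2-u^3-\bar u^3$, $\beta_1=(\bar u^2-u)\rho$, $\beta_2=(\bar u^2-u)\sigma$, $\beta_3=(\bar u^2-u)\tau$, and $H=\begin{pmatrix}\alpha&\beta_1&\bar\beta_3\\ \bar\beta_1&\alpha&\beta_2\\ \beta_3&\bar\beta_2&\alpha\end{pmatrix}$, a Hermitian matrix (of signature $(2,1)$ for the parameters considered) defining the form $\langle X,Y\rangle=Y^*HX$. Let $R_1=\begin{pmatrix}u^2&\rho&-u\bar\tau\\0&\bar u&0\\0&0&\bar u\end{pmatrix}$, $R_2=\begin{pmatrix}\bar u&0&0\\-u\bar\rho&u^2&\sigma\\0&0&\bar u\end{pmatrix}$, $R_3=\begin{pmatrix}\bar u&0&0\\0&\bar u&0\\ \tau&-u\bar\sigma&u^2\end{pmatrix}$. The group $\mathcal{T}(p,(\rho,\sigma,\tau))$ is the subgroup of $U(H)$ generated by $R_1,R_2,R_3$, acting on $H^2_{\mathbb{C}}=\{[X]:\langle X,X\rangle<0\}$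 through its image in $PU(H)$; all statements refer to this image. $R_1$ and $A$ are complex reflections (non-identity elements fixing pointwise a complex line) for these $p$; $m(\cdot)$ denotes the mirror (fixed complex line), and $\mathrm{Stab}_\Gamma(m)$ is the setwise stabilizer of $m$ in $\Gamma$. *)

theory Defs
  imports "HOL-Analysis.Analysis"
begin

type_synonym cmat = "complex ^ 3 ^ 3"
type_synonym cvec = "complex ^ 3"

text \<open>Rows are listed first: (vector [r1, r2, r3]) $ i $ j is the (i,j) entry.\<close>

definition uu :: "nat \<Rightarrow> complex" where
  "uu p = exp (2 * pi * \<i> / (3 * of_nat p))"

definition Hmat :: "nat \<Rightarrow> complex \<Rightarrow> complex \<Rightarrow> complex \<Rightarrow> cmat" where
  "Hmat p \<rho> \<sigma> \<tau> =
    (let u = uu p; \<alpha> = 2 - u^3 - cnj u ^ 3; c = cnj u ^ 2 - u;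
         \<beta>1 = c * \<rho>; \<beta>2 = c * \<sigma>; \<beta>3 = c * \<tau>
     in vector [vector [\<alpha>, \<beta>1, cnj \<beta>3],
                vector [cnj \<beta>1, \<alpha>, \<beta>2],
                vector [\<beta>3, cnj \<beta>2, \<alpha>]])"

definition hform :: "cmat \<Rightarrow> cvec \<Rightarrow> cvec \<Rightarrow> complex" where
  "hform H X Y = (\<Sum>i\<in>UNIV. cnj (Y $ i) * ((H *v X) $ i))"

definition R1 :: "nat \<Rightarrow> complex \<Rightarrow> complex \<Rightarrow> complex \<Rightarrow> cmat" where
  "R1 p \<rho> \<sigma> \<tau> = (let u = uu p in
     vector [vector [u^2, \<rho>, - u * cnj \<tau>],
             vector [0, cnj u, 0],
             vector [0, 0, cnj u]])"

definition R2 :: "nat \<Rightarrow> complex \<Rightarrow> complex \<Rightarrow> complex \<Rightarrow> cmat" where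
  "R2 p \<rho> \<sigma> \<tau> = (let u = uu p in
     vector [vector [cnj u, 0, 0],
             vector [- u * cnj \<rho>, u^2, \<sigma>],
             vector [0, 0, cnj u]])"

definition R3 :: "nat \<Rightarrow> complex \<Rightarrow> complex \<Rightarrow> complex \<Rightarrow> cmat" where
  "R3 p \<rho> \<sigma> \<tau> = (let u = uu p in
     vector [vector [cnj u, 0, 0],
             vector [0, cnj u, 0],
             vector [\<tau>, - u * cnj \<sigma>, u^2]])"

inductive_set gen_grp :: "cmat set \<Rightarrow> cmat set" for S where
  gen_one: "mat 1 \<in> gen_grp S"
| gen_elem: "g \<in> S \<Longrightarrow> g \<in> gen_grp S"
| gen_inv: "g \<in> S \<Longrightarrow> matrix_inv g \<in> gen_grp S"
| gen_mult: "a \<in> gen_grp S \<Longrightarrow> b \<in> gen_grp S \<Longrightarrow> a ** b \<in> gen_grp S"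

definition TGroup :: "nat \<Rightarrow> complex \<Rightarrow> complex \<Rightarrow> complex \<Rightarrow> cmat set" where
  "TGroup p \<rho> \<sigma> \<tau> = gen_grp {R1 p \<rho> \<sigma> \<tau>, R2 p \<rho> \<sigma> \<tau>, R3 p \<rho> \<sigma> \<tau>}"

text \<open>Mirror of g in complex hyperbolic space, as the cone of negative vectors X whose
  projective class [X] is fixed by g (for a complex reflection this is the fixed complex line).\<close>
definition mirror :: "cmat \<Rightarrow> cmat \<Rightarrow> cvec set" where
  "mirror H g = {X. Re (hform H X X) < 0 \<and> (\<exists>c. g *v X = c *s X)}"

text \<open>Setwise stabilizer of a (scaling-invariant) set of vectors, i.e. of the corresponding
  set of points of the projective ball.\<close>
definition Stab :: "cmat set \<Rightarrow> cvec set \<Rightarrow> cmat set" where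
  "Stab \<Gamma> M = {g \<in> \<Gamma>. (\<lambda>X. g *v X) ` M = M}"

definition rhoS2 :: complex where
  "rhoS2 = 1 + ((-1 + \<i> * sqrt 3) / 2) * ((1 + sqrt 5) / 2)"

end

theory Submission
  imports Defs
begin


lemma uu_pow: "uu p ^ n = exp (of_nat n * (2 * pi * \<i> / (3 * of_nat p)))"
  unfolding uu_def by (rule exp_of_nat_mult[symmetric])

lemma omega_val: "exp (2 * pi * \<i> / 3) = (-1 + \<i> * sqrt 3) / 2"
proof -
  have "exp (2 * pi * \<i> / 3) = cis (2*pi/3)"
    by (simp add: cis_conv_exp mult.commute)
  also have "cos (2*pi/3) = - 1/2"
  proof -
    have e: "2*pi/3 = pi - pi/3" by simp
    show ?thesis unfolding e cos_pi_minus cos_60 by simp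
  qed
  moreover have "sin (2*pi/3) = sqrt 3 / 2"
  proof -
    have e: "2*pi/3 = pi - pi/3" by simp
    show ?thesis unfolding e sin_pi_minus sin_60 by simp
  qed
  ultimately show ?thesis by (simp add: complex_eq_iff cis.code)
qed

lemma uu_pow_p: "p > 0 \<Longrightarrow> uu p ^ p = (-1 + \<i> * sqrt 3) / 2"
proof -
  assume "p > 0"
  then have e: "of_nat p * (2 * pi * \<i> / (3 * of_nat p)) = 2 * pi * \<i> / 3"
    by (simp add: field_simps)
  show ?thesis by (simp only: uu_pow e omega_val)
qed

lemma uu_pow_3p: "p > 0 \<Longrightarrow> uu p ^ (3*p) = 1"
proof -
  assume "p > 0"
  then have e: "of_nat (3*p) * (2 * pi * \<i> / (3 * of_nat p)) = 2 * of_real pi * \<i>"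
    by (simp add: field_simps)
  show ?thesis by (simp only: uu_pow e exp_two_pi_i)
qed

lemma cnj_uu: "cnj (uu p) * uu p = 1"
proof -
  have "cnj (uu p) = exp (- (2 * pi * \<i> / (3 * of_nat p)))"
    unfolding uu_def exp_cnj by simp
  then show ?thesis unfolding uu_def by (simp add: exp_minus)
qed

lemma u4_sq: "uu 4 ^ 2 = (1 + \<i> * sqrt 3) / 2"
proof -
  have "uu 4 ^ 2 = exp (\<i> * of_real (pi/3))"
    by (simp add: uu_pow field_simps)
  also have "\<dots> = cis (pi/3)" by (simp add: cis_conv_exp)
  finally show ?thesis by (simp add: complex_eq_iff cis.code cos_60 sin_60)
qed

lemma u4_rel: "uu 4 ^ 4 = uu 4 ^ 2 - 1"
proof -
  have "uu 4 ^ 4 = (uu 4 ^ 2)^2" by simp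
  also have "\<dots> = ((1 + \<i> * sqrt 3) / 2)^2" by (simp add: u4_sq)
  also have "\<dots> = (1 + \<i> * sqrt 3) / 2 - 1"
    by (simp add: power2_eq_square field_simps complex_eq_iff)
  finally show ?thesis by (simp add: u4_sq)
qed

lemma u4_cnj: "cnj (uu 4) = uu 4 - uu 4 ^ 3"
proof -
  have h: "uu 4 * (uu 4 - uu 4 ^ 3) = 1"
  proof -
    have "uu 4 * (uu 4 - uu 4 ^ 3) = uu 4 ^ 2 - uu 4 ^ 4" by (simp add: algebra_simps power_numeral_reduce)
    then show ?thesis by (simp add: u4_rel)
  qed
  have "cnj (uu 4) = cnj (uu 4) * (uu 4 * (uu 4 - uu 4 ^ 3))" by (simp add: h)
  also have "\<dots> = (cnj (uu 4) * uu 4) * (uu 4 - uu 4 ^ 3)" by (simp add: mult.assoc)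
  finally show ?thesis by (simp add: cnj_uu)
qed



lemma u5_15: "uu 5 ^ 15 = 1"
  using uu_pow_3p[of 5] by simp

lemma u5_3_ne: "uu 5 ^ 3 \<noteq> 1"
proof
  assume h: "uu 5 ^ 3 = 1"
  have "uu 5 ^ 3 = exp (2 * pi * \<i> / 5)" by (simp add: uu_pow field_simps)
  with h have "exp (2 * pi * \<i> / 5) = 1" by simp
  then obtain n :: int where "2 * pi / 5 = of_int (2*n) * pi" by (auto simp: exp_eq_1)
  then have "(1::real) = of_int (5*n)" by (simp add: field_simps)
  then have "(1::int) = 5*n" by linarith
  then show False by presburger
qed

lemma u5_5_ne: "uu 5 ^ 5 \<noteq> 1"
  using uu_pow_p[of 5] by (simp add: complex_eq_iff)

lemma poly15: "((x::complex)^5-1)*(x^3-1)*(x^8 - x^7 + x^5 - x^4 + x^3 - x + 1) = (x^15-1)*(x-1)"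
  by algebra

lemma u5_rel: "uu 5 ^ 8 = uu 5 ^ 7 - uu 5 ^ 5 + uu 5 ^ 4 - uu 5 ^ 3 + uu 5 - 1"
proof -
  have "(uu 5^5-1)*(uu 5^3-1)*(uu 5^8 - uu 5^7 + uu 5^5 - uu 5^4 + uu 5^3 - uu 5 + 1) = 0"
    using poly15[of "uu 5"] u5_15 by simp
  then have "uu 5^8 - uu 5^7 + uu 5^5 - uu 5^4 + uu 5^3 - uu 5 + 1 = 0"
    using u5_3_ne u5_5_ne by simp
  then show ?thesis by (simp add: algebra_simps eq_neg_iff_add_eq_0 diff_eq_eq)
qed

lemma u5_pow_mod: "uu 5 ^ n = uu 5 ^ (n mod 15)"
proof -
  have "uu 5 ^ n = uu 5 ^ (15 * (n div 15) + n mod 15)" by simp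
  also have "\<dots> = (uu 5 ^ 15) ^ (n div 15) * uu 5 ^ (n mod 15)" by (simp only: power_add power_mult)
  finally show ?thesis by (simp add: u5_15)
qed

lemma u5_cnj: "cnj (uu 5) = uu 5 ^ 14"
proof -
  have "cnj (uu 5) = cnj (uu 5) * uu 5 ^ 15" by (simp add: u5_15)
  also have "uu 5 ^ 15 = uu 5 ^ 1 * uu 5 ^ 14" unfolding power_add[symmetric] by simp
  also have "cnj (uu 5) * (uu 5 ^ 1 * uu 5 ^ 14) = (cnj (uu 5) * uu 5) * uu 5 ^ 14" by (simp add: mult.assoc)
  finally show ?thesis by (simp add: cnj_uu)
qed

lemma u5_6: "uu 5 ^ 6 = cis (4*pi/5)"
proof -
  have "uu 5 ^ 6 = exp (\<i> * of_real (4*pi/5))" by (simp add: uu_pow field_simps)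
  then show ?thesis by (simp add: cis_conv_exp)
qed

lemma cos45_neg: "cos (4*pi/5) < 0"
proof -
  have e: "4*pi/5 = pi - pi/5" by simp
  have "0 < cos (pi/5)" by (rule cos_gt_zero_pi) (use pi_gt_zero in \<open>linarith+\<close>)
  then show ?thesis unfolding e cos_pi_minus by simp
qed

lemma phi5: "(1 + complex_of_real (sqrt 5)) / 2 = - (uu 5 ^ 6 + uu 5 ^ 9)"
proof -
  define s where "s = uu 5 ^ 6 + uu 5 ^ 9"
  have c9: "cnj (uu 5 ^ 6) = uu 5 ^ 9"
  proof -
    have "cnj (uu 5 ^ 6) = uu 5 ^ 84" by (simp add: u5_cnj flip: power_mult)
    also have "\<dots> = uu 5 ^ 9" by (subst u5_pow_mod) simp
    finally show ?thesis .
  qed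
  have sr: "s = of_real (2 * cos (4*pi/5))"
  proof -
    have "s = uu 5 ^ 6 + cnj (uu 5 ^ 6)" unfolding s_def c9 ..
    also have "\<dots> = of_real (2 * Re (uu 5 ^ 6))" by (rule complex_add_cnj)
    finally show ?thesis by (simp add: u5_6 cis.code)
  qed
  have T: "1 + uu 5 ^ 3 + uu 5 ^ 6 + uu 5 ^ 9 + uu 5 ^ 12 = 0"
  proof -
    have "(uu 5 ^ 3 - 1) * (1 + uu 5 ^ 3 + uu 5 ^ 6 + uu 5 ^ 9 + uu 5 ^ 12) = uu 5 ^ 15 - 1"
      by (simp add: algebra_simps flip: power_add)
    then show ?thesis using u5_15 u5_3_ne by simp
  qed
  have "s^2 + s - 1 = 1 + uu 5 ^ 3 + uu 5 ^ 6 + uu 5 ^ 9 + uu 5 ^ 12"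
  proof -
    have "s^2 + s - 1 = uu 5 ^ 12 + 2 * uu 5 ^ 15 + uu 5 ^ 18 + uu 5 ^ 6 + uu 5 ^ 9 - 1"
      unfolding s_def by (simp add: power2_eq_square algebra_simps flip: power_add)
    also have "uu 5 ^ 18 = uu 5 ^ 3" by (subst u5_pow_mod) simp
    finally show ?thesis by (simp add: u5_15)
  qed
  with T have "s^2 + s - 1 = 0" by simp
  then have q: "(2 * cos (4*pi/5))^2 + 2 * cos (4*pi/5) - 1 = (0::real)"
  proof -
    have "complex_of_real ((2 * cos (4*pi/5))^2 + 2 * cos (4*pi/5) - 1) = 0"
      using \<open>s^2 + s - 1 = 0\<close> unfolding sr by simp
    then show ?thesis by (simp only: of_real_eq_0_iff)
  qed
  define r where "r = 2 * cos (4*pi/5)"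
  have r0: "r < 0" unfolding r_def using cos45_neg by simp
  have q': "r^2 + r - 1 = 0" using q unfolding r_def .
  have "(2*r+1)^2 = 5" using q' by (simp add: power2_eq_square algebra_simps)
  moreover have "2*r+1 < 0"
  proof -
    have "r^2 = 1 - r" using q' by simp
    with r0 have "r^2 > 1" by simp
    have "r < -1"
    proof (rule ccontr)
      assume "\<not> r < -1"
      then have "-r \<le> 1" "0 \<le> -r" using r0 by auto
      then have "(-r)^2 \<le> 1" using power_le_one by blast
      with \<open>r^2 > 1\<close> show False by simp
    qed
    then show ?thesis by simp
  qed
  ultimately have "2*r+1 = - sqrt 5"
  proof -
    assume a: "(2*r+1)^2 = 5" and b: "2*r+1 < 0"
    have "sqrt ((2*r+1)^2) = sqrt 5" using a by simp
    then have "\<bar>2*r+1\<bar> = sqrt 5" by (simp only: real_sqrt_abs)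
    then show ?thesis using b by simp
  qed
  then have "r = - (1 + sqrt 5)/2" by simp
  then have "s = of_real (- (1 + sqrt 5)/2)" unfolding sr r_def[symmetric] by (simp only:)
  also have "\<dots> = - ((1 + complex_of_real (sqrt 5)) / 2)" by (simp add: field_simps)
  finally have "s = - ((1 + complex_of_real (sqrt 5)) / 2)" .
  then show ?thesis unfolding s_def by simp
qed



datatype r8 = R8 int int int int int int int int

fun mul4 :: "r8 \<Rightarrow> r8 \<Rightarrow> r8" where "mul4 (R8 a0 a1 a2 a3 a4 a5 a6 a7) (R8 b0 b1 b2 b3 b4 b5 b6 b7) = R8 (a0*b0 - a1*b3 - a2*b2 - a3*b1 - a3*b3 + a4*b4 - a5*b7 - a6*b6 - a7*b5 - a7*b7) (a0*b1 + a1*b0 - a2*b3 - a3*b2 + a4*b5 + a5*b4 - a6*b7 - a7*b6) (a0*b2 + a1*b1 + a1*b3 + a2*b0 + a2*b2 + a3*b1 + a4*b6 + a5*b5 + a5*b7 + a6*b4 + a6*b6 + a7*b5) (a0*b3 + a1*b2 + a2*b1 + a2*b3 + a3*b0 + a3*b2 + a4*b7 + a5*b6 + a6*b5 + a6*b7 + a7*b4 + a7*b6) (a0*b4 - a1*b7 - a2*b6 - a3*b5 - a3*b7 + a4*b0 + a4*b4 - a5*b3 - a5*b7 - a6*b2 - a6*b6 - a7*b1 - a7*b3 - a7*b5 - a7*b7) (a0*b5 + a1*b4 - a2*b7 - a3*b6 + a4*b1 + a4*b5 + a5*b0 + a5*b4 - a6*b3 - a6*b7 - a7*b2 - a7*b6)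 (a0*b6 + a1*b5 + a1*b7 + a2*b4 + a2*b6 + a3*b5 + a4*b2 + a4*b6 + a5*b1 + a5*b3 + a5*b5 + a5*b7 + a6*b0 + a6*b2 + a6*b4 + a6*b6 + a7*b1 + a7*b5) (a0*b7 + a1*b6 + a2*b5 + a2*b7 + a3*b4 + a3*b6 + a4*b3 + a4*b7 + a5*b2 + a5*b6 + a6*b1 + a6*b3 + a6*b5 + a6*b7 + a7*b0 + a7*b2 + a7*b4 + a7*b6)"
fun mul5 :: "r8 \<Rightarrow> r8 \<Rightarrow> r8" where "mul5 (R8 a0 a1 a2 a3 a4 a5 a6 a7) (R8 b0 b1 b2 b3 b4 b5 b6 b7) = R8 (a0*b0 - a1*b7 - a2*b6 - a2*b7 - a3*b5 - a3*b6 - a3*b7 - a4*b4 - a4*b5 - a4*b6 - a5*b3 - a5*b4 - a5*b5 - a6*b2 - a6*b3 - a6*b4 + a6*b7 - a7*b1 - a7*b2 - a7*b3 + a7*b6 + a7*b7) (a0*b1 + a1*b0 + a1*b7 + a2*b6 + a3*b5 + a4*b4 - a4*b7 + a5*b3 - a5*b6 + a6*b2 - a6*b5 - a6*b7 + a7*b1 - a7*b4 - a7*b6) (a0*b2 + a1*b1 + a2*b0 + a2*b7 + a3*b6 + a4*b5 + a5*b4 - a5*b7 + a6*b3 - a6*b6 + a7*b2 - a7*b5 - a7*b7) (a0*b3 + a1*b2 - a1*b7 + a2*b1 - a2*b6 - a2*b7 + a3*b0 - a3*b5 - a3*b6 - a4*b4 - a4*b5 - a5*b3 - a5*b4 - a6*b2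 - a6*b3 - a7*b1 - a7*b2 + a7*b7) (a0*b4 + a1*b3 + a1*b7 + a2*b2 + a2*b6 + a3*b1 + a3*b5 + a4*b0 + a4*b4 + a5*b3 + a6*b2 - a6*b7 + a7*b1 - a7*b6 - a7*b7) (a0*b5 + a1*b4 - a1*b7 + a2*b3 - a2*b6 + a3*b2 - a3*b5 - a3*b7 + a4*b1 - a4*b4 - a4*b6 + a5*b0 - a5*b3 - a5*b5 - a6*b2 - a6*b4 + a6*b7 - a7*b1 - a7*b3 + a7*b6) (a0*b6 + a1*b5 + a2*b4 - a2*b7 + a3*b3 - a3*b6 + a4*b2 - a4*b5 - a4*b7 + a5*b1 - a5*b4 - a5*b6 + a6*b0 - a6*b3 - a6*b5 - a7*b2 - a7*b4 + a7*b7) (a0*b7 + a1*b6 + a1*b7 + a2*b5 + a2*b6 + a2*b7 + a3*b4 + a3*b5 + a3*b6 + a4*b3 + a4*b4 + a4*b5 + a5*b2 + a5*b3 + a5*b4 - a5*b7 + a6*b1 + a6*b2 + a6*b3 - a6*b6 - a6*b7 + a7*b0 + a7*b1 + a7*b2 - a7*b5 - a7*b6 - a7*b7)"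
fun conj4 :: "r8 \<Rightarrow> r8" where "conj4 (R8 a0 a1 a2 a3 a4 a5 a6 a7) = R8 (a0 + a2) (a1) (- a2) (- a1 - a3) (a4 + a6) (a5) (- a6) (- a5 - a7)"
fun conj5 :: "r8 \<Rightarrow> r8" where "conj5 (R8 a0 a1 a2 a3 a4 a5 a6 a7) = R8 (a0 + a1 + a2 - a5 - a6 - a7) (- a2 - a4 + a7) (- a1 - a3 + a6) (a1 - a6 - a7) (- a1 - a2 + a7) (a2 - a5 - a7) (a1 - a4 - a6) (- a1 - a2 - a3 + a6 + a7)"
fun radd :: "r8 \<Rightarrow> r8 \<Rightarrow> r8" where
 "radd (R8 a0 a1 a2 a3 a4 a5 a6 a7) (R8 b0 b1 b2 b3 b4 b5 b6 b7) = R8 (a0+b0) (a1+b1) (a2+b2) (a3+b3) (a4+b4) (a5+b5) (a6+b6) (a7+b7)"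
fun rneg :: "r8 \<Rightarrow> r8" where
 "rneg (R8 a0 a1 a2 a3 a4 a5 a6 a7) = R8 (-a0) (-a1) (-a2) (-a3) (-a4) (-a5) (-a6) (-a7)"

definition phi :: complex where "phi = (1 + complex_of_real (sqrt 5)) / 2"

fun ival4 :: "r8 \<Rightarrow> complex" where
 "ival4 (R8 a0 a1 a2 a3 a4 a5 a6 a7) = (of_int a0 + of_int a1 * uu 4 + of_int a2 * uu 4 ^ 2 + of_int a3 * uu 4 ^ 3)
     + phi * (of_int a4 + of_int a5 * uu 4 + of_int a6 * uu 4 ^ 2 + of_int a7 * uu 4 ^ 3)"
fun ival5 :: "r8 \<Rightarrow> complex" where
 "ival5 (R8 a0 a1 a2 a3 a4 a5 a6 a7) = of_int a0 + of_int a1 * uu 5 + of_int a2 * uu 5 ^ 2 + of_int a3 * uu 5 ^ 3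
     + of_int a4 * uu 5 ^ 4 + of_int a5 * uu 5 ^ 5 + of_int a6 * uu 5 ^ 6 + of_int a7 * uu 5 ^ 7"

lemma phi_sq: "phi ^ 2 = phi + 1"
  unfolding phi_def by (simp add: power2_eq_square field_simps flip: of_real_mult)

lemma phi_cnj: "cnj phi = phi"
  unfolding phi_def by simp

lemma mul4_hom: "ival4 (mul4 x y) = ival4 x * ival4 y"
proof -
  obtain a0 a1 a2 a3 a4 a5 a6 a7 where x: "x = (R8 a0 a1 a2 a3 a4 a5 a6 a7)" by (cases x) auto
  obtain b0 b1 b2 b3 b4 b5 b6 b7 where y: "y = R8 b0 b1 b2 b3 b4 b5 b6 b7" by (cases y) auto
  show ?thesis unfolding x y mul4.simps ival4.simps of_int_add of_int_diff of_int_mult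
    using u4_rel phi_sq by algebra
qed

lemma mul5_hom: "ival5 (mul5 x y) = ival5 x * ival5 y"
proof -
  obtain a0 a1 a2 a3 a4 a5 a6 a7 where x: "x = (R8 a0 a1 a2 a3 a4 a5 a6 a7)" by (cases x) auto
  obtain b0 b1 b2 b3 b4 b5 b6 b7 where y: "y = R8 b0 b1 b2 b3 b4 b5 b6 b7" by (cases y) auto
  show ?thesis unfolding x y mul5.simps ival5.simps of_int_add of_int_diff of_int_mult
    using u5_rel by algebra
qed

lemma u5_cnj': "cnj (uu 5) = 1 - uu 5 ^ 2 + uu 5 ^ 3 - uu 5 ^ 4 + uu 5 ^ 6 - uu 5 ^ 7"
  unfolding u5_cnj using u5_rel by algebra

lemma conj4_hom: "ival4 (conj4 x) = cnj (ival4 x)"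
proof -
  obtain a0 a1 a2 a3 a4 a5 a6 a7 where x: "x = (R8 a0 a1 a2 a3 a4 a5 a6 a7)" by (cases x) auto
  show ?thesis unfolding x conj4.simps ival4.simps complex_cnj_add complex_cnj_mult complex_cnj_power
     complex_cnj_of_int phi_cnj u4_cnj of_int_add of_int_diff of_int_minus
    using u4_rel by algebra
qed

lemma conj5_hom: "ival5 (conj5 x) = cnj (ival5 x)"
proof -
  obtain a0 a1 a2 a3 a4 a5 a6 a7 where x: "x = (R8 a0 a1 a2 a3 a4 a5 a6 a7)" by (cases x) auto
  show ?thesis unfolding x conj5.simps ival5.simps complex_cnj_add complex_cnj_mult complex_cnj_power
     complex_cnj_of_int u5_cnj' of_int_add of_int_diff of_int_minus
    using u5_rel by algebra
qed



definition rmul :: "nat \<Rightarrow> r8 \<Rightarrow> r8 \<Rightarrow> r8" where "rmul p x y = (if p = 4 then mul4 x y else mul5 x y)"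
definition rcnj :: "nat \<Rightarrow> r8 \<Rightarrow> r8" where "rcnj p x = (if p = 4 then conj4 x else conj5 x)"
definition ival :: "nat \<Rightarrow> r8 \<Rightarrow> complex" where "ival p x = (if p = 4 then ival4 x else ival5 x)"

lemma ival_add[simp]: "ival p (radd x y) = ival p x + ival p y"
  by (cases x; cases y) (simp add: ival_def algebra_simps)
lemma ival_neg[simp]: "ival p (rneg x) = - ival p x"
  by (cases x) (simp add: ival_def algebra_simps)
lemma ival_mul[simp]: "ival p (rmul p x y) = ival p x * ival p y"
  by (simp add: ival_def rmul_def mul4_hom mul5_hom)
lemma ival_cnj[simp]: "ival p (rcnj p x) = cnj (ival p x)"
  by (simp add: ival_def rcnj_def conj4_hom conj5_hom)

definition z8 :: r8 where "z8 = R8 0 0 0 0 0 0 0 0"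
definition o8 :: r8 where "o8 = R8 1 0 0 0 0 0 0 0"
definition ur :: r8 where "ur = R8 0 1 0 0 0 0 0 0"
definition rhor :: "nat \<Rightarrow> r8" where
  "rhor p = (if p = 4 then R8 1 0 0 0 (-1) 0 1 0 else R8 0 1 1 (-1) 1 0 0 1)"

lemma ival_z8[simp]: "ival p z8 = 0" by (simp add: ival_def z8_def)
lemma ival_o8[simp]: "ival p o8 = 1" by (simp add: ival_def o8_def)

lemma ival_ur: "p \<in> {4,5} \<Longrightarrow> ival p ur = uu p"
  by (auto simp: ival_def ur_def)

lemma rhoS2_eq: "rhoS2 = 1 + ((-1 + \<i> * sqrt 3) / 2) * phi"
  by (simp add: rhoS2_def phi_def)

lemma ival_rhor: "p \<in> {4,5} \<Longrightarrow> ival p (rhor p) = rhoS2"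
proof -
  assume "p \<in> {4,5}"
  then consider "p = 4" | "p = 5" by auto
  then show ?thesis
  proof cases
    case 1
    have w: "uu 4 ^ 2 - 1 = (-1 + \<i> * sqrt 3) / 2" using uu_pow_p[of 4] u4_rel by simp
    show ?thesis unfolding 1 rhoS2_eq w[symmetric]
      by (simp add: ival_def rhor_def algebra_simps)
  next
    case 2
    have w: "uu 5 ^ 5 = (-1 + \<i> * sqrt 3) / 2" using uu_pow_p[of 5] by simp
    have "ival5 (R8 0 1 1 (-1) 1 0 0 1) = 1 + uu 5 ^ 5 * (- (uu 5 ^ 6 + uu 5 ^ 9))"
      using u5_rel by simp algebra
    then show ?thesis unfolding 2 rhoS2_eq phi_def phi5 w[symmetric]
      by (simp add: ival_def rhor_def)
  qed
qed

datatype m3 = M3 r8 r8 r8 r8 r8 r8 r8 r8 r8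

fun mmul :: "nat \<Rightarrow> m3 \<Rightarrow> m3 \<Rightarrow> m3" where
 "mmul p (M3 a11 a12 a13 a21 a22 a23 a31 a32 a33) (M3 b11 b12 b13 b21 b22 b23 b31 b32 b33) =
   M3 (radd (radd (rmul p a11 b11) (rmul p a12 b21)) (rmul p a13 b31))
      (radd (radd (rmul p a11 b12) (rmul p a12 b22)) (rmul p a13 b32))
      (radd (radd (rmul p a11 b13) (rmul p a12 b23)) (rmul p a13 b33))
      (radd (radd (rmul p a21 b11) (rmul p a22 b21)) (rmul p a23 b31))
      (radd (radd (rmul p a21 b12) (rmul p a22 b22)) (rmul p a23 b32))
      (radd (radd (rmul p a21 b13) (rmul p a22 b23)) (rmul p a23 b33))
      (radd (radd (rmul p a31 b11) (rmul p a32 b21)) (rmul p a33 b31))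
      (radd (radd (rmul p a31 b12) (rmul p a32 b22)) (rmul p a33 b32))
      (radd (radd (rmul p a31 b13) (rmul p a32 b23)) (rmul p a33 b33))"

fun madj :: "nat \<Rightarrow> m3 \<Rightarrow> m3" where
 "madj p (M3 a11 a12 a13 a21 a22 a23 a31 a32 a33) =
   M3 (rcnj p a11) (rcnj p a21) (rcnj p a31) (rcnj p a12) (rcnj p a22) (rcnj p a32)
      (rcnj p a13) (rcnj p a23) (rcnj p a33)"

fun ivalM :: "nat \<Rightarrow> m3 \<Rightarrow> cmat" where
 "ivalM p (M3 a11 a12 a13 a21 a22 a23 a31 a32 a33) =
   vector [vector [ival p a11, ival p a12, ival p a13],
           vector [ival p a21, ival p a22, ival p a23],
           vector [ival p a31, ival p a32, ival p a33]]"

definition adjM :: "cmat \<Rightarrow> cmat" where "adjM g = (\<chi> i j. cnj (g $ j $ i))"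

lemma ivalM_mul: "ivalM p (mmul p A B) = ivalM p A ** ivalM p B"
  by (cases A; cases B) (simp add: vec_eq_iff forall_3 matrix_matrix_mult_def sum_3)

lemma ivalM_adj: "ivalM p (madj p A) = adjM (ivalM p A)"
  by (cases A) (simp add: vec_eq_iff forall_3 adjM_def)

definition m3I :: m3 where "m3I = M3 o8 z8 z8 z8 o8 z8 z8 z8 o8"

lemma ivalM_I: "ivalM p m3I = mat 1"
  by (simp add: m3I_def vec_eq_iff forall_3 mat_def)

lemma hform_mult: "hform H (g *v X) (g *v Y) = hform (adjM g ** H ** g) X Y"
  unfolding hform_def matrix_vector_mult_def matrix_matrix_mult_def adjM_def
  by (simp add: sum_3 algebra_simps)



definition ubr :: "nat \<Rightarrow> r8" where "ubr p = rcnj p ur"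
definition u2r :: "nat \<Rightarrow> r8" where "u2r p = rmul p ur ur"

definition R1r :: "nat \<Rightarrow> m3" where
  "R1r p = M3 (u2r p) (rhor p) (rneg ur) z8 (ubr p) z8 z8 z8 (ubr p)"
definition R2r :: "nat \<Rightarrow> m3" where
  "R2r p = M3 (ubr p) z8 z8 (rneg (rmul p ur (rcnj p (rhor p)))) (u2r p) o8 z8 z8 (ubr p)"
definition R3r :: "nat \<Rightarrow> m3" where
  "R3r p = M3 (ubr p) z8 z8 z8 (ubr p) z8 o8 (rneg ur) (u2r p)"
definition R1ir :: "nat \<Rightarrow> m3" where
  "R1ir p = M3 (rmul p (ubr p) (ubr p)) (rneg (rmul p (rhor p) (ubr p))) o8 z8 ur z8 z8 z8 ur"
definition R2ir :: "nat \<Rightarrow> m3" where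
  "R2ir p = M3 ur z8 z8 (rcnj p (rhor p)) (rmul p (ubr p) (ubr p)) (rneg (ubr p)) z8 z8 ur"
definition R3ir :: "nat \<Rightarrow> m3" where
  "R3ir p = M3 ur z8 z8 z8 ur z8 (rneg (ubr p)) o8 (rmul p (ubr p) (ubr p))"

definition alr :: "nat \<Rightarrow> r8" where
  "alr p = radd (radd (R8 2 0 0 0 0 0 0 0) (rneg (rmul p ur (rmul p ur ur))))
                (rneg (rmul p (ubr p) (rmul p (ubr p) (ubr p))))"
definition cr :: "nat \<Rightarrow> r8" where "cr p = radd (rmul p (ubr p) (ubr p)) (rneg ur)"
definition Hr :: "nat \<Rightarrow> m3" where
  "Hr p = M3 (alr p) (rmul p (cr p) (rhor p)) (rcnj p (cr p))
             (rcnj p (rmul p (cr p) (rhor p))) (alr p) (cr p)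
             (cr p) (rcnj p (cr p)) (alr p)"

definition grep :: "nat \<Rightarrow> char \<Rightarrow> m3" where
  "grep p ch = (if ch = CHR ''a'' then R1r p else if ch = CHR ''A'' then R1ir p
     else if ch = CHR ''b'' then R2r p else if ch = CHR ''B'' then R2ir p
     else if ch = CHR ''c'' then R3r p else if ch = CHR ''C'' then R3ir p else m3I)"

fun wev :: "nat \<Rightarrow> char list \<Rightarrow> m3" where
  "wev p [] = m3I"
| "wev p (ch # w) = mmul p (grep p ch) (wev p w)"

lemma inv_chk4:
  "mmul 4 (R1r 4) (R1ir 4) = m3I" "mmul 4 (R1ir 4) (R1r 4) = m3I"
  "mmul 4 (R2r 4) (R2ir 4) = m3I" "mmul 4 (R2ir 4) (R2r 4) = m3I"
  "mmul 4 (R3r 4) (R3ir 4) = m3I" "mmul 4 (R3ir 4) (R3r 4) = m3I"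
  by code_simp+

lemma inv_chk5:
  "mmul 5 (R1r 5) (R1ir 5) = m3I" "mmul 5 (R1ir 5) (R1r 5) = m3I"
  "mmul 5 (R2r 5) (R2ir 5) = m3I" "mmul 5 (R2ir 5) (R2r 5) = m3I"
  "mmul 5 (R3r 5) (R3ir 5) = m3I" "mmul 5 (R3ir 5) (R3r 5) = m3I"
  by code_simp+

lemma unit_chk4:
  "mmul 4 (mmul 4 (madj 4 (R1r 4)) (Hr 4)) (R1r 4) = Hr 4"
  "mmul 4 (mmul 4 (madj 4 (R2r 4)) (Hr 4)) (R2r 4) = Hr 4"
  "mmul 4 (mmul 4 (madj 4 (R3r 4)) (Hr 4)) (R3r 4) = Hr 4"
  "mmul 4 (mmul 4 (madj 4 (R1ir 4)) (Hr 4)) (R1ir 4) = Hr 4"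
  "mmul 4 (mmul 4 (madj 4 (R2ir 4)) (Hr 4)) (R2ir 4) = Hr 4"
  "mmul 4 (mmul 4 (madj 4 (R3ir 4)) (Hr 4)) (R3ir 4) = Hr 4"
  by code_simp+

lemma unit_chk5:
  "mmul 5 (mmul 5 (madj 5 (R1r 5)) (Hr 5)) (R1r 5) = Hr 5"
  "mmul 5 (mmul 5 (madj 5 (R2r 5)) (Hr 5)) (R2r 5) = Hr 5"
  "mmul 5 (mmul 5 (madj 5 (R3r 5)) (Hr 5)) (R3r 5) = Hr 5"
  "mmul 5 (mmul 5 (madj 5 (R1ir 5)) (Hr 5)) (R1ir 5) = Hr 5"
  "mmul 5 (mmul 5 (madj 5 (R2ir 5)) (Hr 5)) (R2ir 5) = Hr 5"
  "mmul 5 (mmul 5 (madj 5 (R3ir 5)) (Hr 5)) (R3ir 5) = Hr 5"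
  by code_simp+

definition "wx = ''CBc''"
definition "wX = ''Cbc''"
definition "wy = ''bcBaCbcabac''"
definition "wY = ''CABACBcAbCB''"
definition "warefl = ''abcBabcBabcBabcBabcB''"

lemma word_chk4:
  "wev 4 (wy @ ''a'') = wev 4 (''a'' @ wy)"
  "wev 4 (wY @ ''a'') = wev 4 (''a'' @ wY)"
  "wev 4 (''A'' @ ''a'') = wev 4 (''a'' @ ''A'')"
  "wev 4 (wx @ warefl) = wev 4 (warefl @ wx)"
  "wev 4 (wX @ warefl) = wev 4 (warefl @ wX)"
  "wev 4 ''c'' = wev 4 (concat [''A'', wx, wy, wX, wY, wX, ''a''])"
  "wev 4 ''C'' = wev 4 (concat [''A'', wx, wy, wx, wY, wX, ''a''])"
  "wev 4 ''b'' = wev 4 (concat [''A'', wx, wy, wX, wY, wX, ''a'', wX, ''A'', wx, wy, wx, wY, wX, ''a''])"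
  "wev 4 ''B'' = wev 4 (concat [''A'', wx, wy, wX, wY, wX, ''a'', wx, ''A'', wx, wy, wx, wY, wX, ''a''])"
  unfolding wx_def wX_def wy_def wY_def warefl_def by code_simp+


lemma word_chk5:
  "wev 5 (wy @ ''a'') = wev 5 (''a'' @ wy)"
  "wev 5 (wY @ ''a'') = wev 5 (''a'' @ wY)"
  "wev 5 (''A'' @ ''a'') = wev 5 (''a'' @ ''A'')"
  "wev 5 (wx @ warefl) = wev 5 (warefl @ wx)"
  "wev 5 (wX @ warefl) = wev 5 (warefl @ wX)"
  "wev 5 ''c'' = wev 5 (concat [''A'', wx, wy, wX, wY, wX, ''a''])"
  "wev 5 ''C'' = wev 5 (concat [''A'', wx, wy, wx, wY, wX, ''a''])"
  "wev 5 ''b'' = wev 5 (concat [''A'', wx, wy, wX, wY, wX, ''a'', wX, ''A'', wx, wy, wx, wY, wX, ''a''])"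
  "wev 5 ''B'' = wev 5 (concat [''A'', wx, wy, wX, wY, wX, ''a'', wx, ''A'', wx, wy, wx, wY, wX, ''a''])"
  unfolding wx_def wX_def wy_def wY_def warefl_def by code_simp+



definition gmat :: "nat \<Rightarrow> char \<Rightarrow> cmat" where
  "gmat p ch = (if ch = CHR ''a'' then R1 p rhoS2 1 1 else if ch = CHR ''A'' then matrix_inv (R1 p rhoS2 1 1)
     else if ch = CHR ''b'' then R2 p rhoS2 1 1 else if ch = CHR ''B'' then matrix_inv (R2 p rhoS2 1 1)
     else if ch = CHR ''c'' then R3 p rhoS2 1 1 else if ch = CHR ''C'' then matrix_inv (R3 p rhoS2 1 1)
     else mat 1)"

fun cw :: "nat \<Rightarrow> char list \<Rightarrow> cmat" where
  "cw p [] = mat 1"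
| "cw p (ch # w) = gmat p ch ** cw p w"

lemma inv_unique:
  fixes A B :: cmat
  assumes "A ** B = mat 1" "B ** A = mat 1"
  shows "matrix_inv A = B"
proof -
  have ex: "\<exists>A'. A ** A' = mat 1 \<and> A' ** A = mat 1" using assms by blast
  define C where "C = matrix_inv A"
  have C: "A ** C = mat 1 \<and> C ** A = mat 1"
    unfolding C_def matrix_inv_def by (rule someI_ex[OF ex])
  have "C = C ** (A ** B)" using assms by simp
  also have "\<dots> = (C ** A) ** B" by (simp add: matrix_mul_assoc)
  also have "\<dots> = B" using C by simp
  finally show ?thesis unfolding C_def .
qed

lemma p45_cases: "p \<in> {4,5} \<Longrightarrow> (p = 4 \<Longrightarrow> P) \<Longrightarrow> (p = 5 \<Longrightarrow> P) \<Longrightarrow> P"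
  by auto

lemma inv_chk:
  assumes "p \<in> {4,5}"
  shows "mmul p (R1r p) (R1ir p) = m3I" "mmul p (R1ir p) (R1r p) = m3I"
  "mmul p (R2r p) (R2ir p) = m3I" "mmul p (R2ir p) (R2r p) = m3I"
  "mmul p (R3r p) (R3ir p) = m3I" "mmul p (R3ir p) (R3r p) = m3I"
  using assms inv_chk4 inv_chk5 by auto

lemma unit_chk:
  assumes "p \<in> {4,5}"
  shows
  "mmul p (mmul p (madj p (R1r p)) (Hr p)) (R1r p) = Hr p"
  "mmul p (mmul p (madj p (R2r p)) (Hr p)) (R2r p) = Hr p"
  "mmul p (mmul p (madj p (R3r p)) (Hr p)) (R3r p) = Hr p"
  "mmul p (mmul p (madj p (R1ir p)) (Hr p)) (R1ir p) = Hr p"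
  "mmul p (mmul p (madj p (R2ir p)) (Hr p)) (R2ir p) = Hr p"
  "mmul p (mmul p (madj p (R3ir p)) (Hr p)) (R3ir p) = Hr p"
  using assms unit_chk4 unit_chk5 by auto

lemma ivalM_R1: "p \<in> {4,5} \<Longrightarrow> ivalM p (R1r p) = R1 p rhoS2 1 1"
  by (simp add: R1_def Let_def R1r_def u2r_def ubr_def ival_ur ival_rhor power2_eq_square)
lemma ivalM_R2: "p \<in> {4,5} \<Longrightarrow> ivalM p (R2r p) = R2 p rhoS2 1 1"
  by (simp add: R2_def Let_def R2r_def u2r_def ubr_def ival_ur ival_rhor power2_eq_square)
lemma ivalM_R3: "p \<in> {4,5} \<Longrightarrow> ivalM p (R3r p) = R3 p rhoS2 1 1"
  by (simp add: R3_def Let_def R3r_def u2r_def ubr_def ival_ur ival_rhor power2_eq_square)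

lemma ivalM_R1i: "p \<in> {4,5} \<Longrightarrow> ivalM p (R1ir p) = matrix_inv (R1 p rhoS2 1 1)"
  by (rule inv_unique[symmetric]) (simp_all add: ivalM_R1[symmetric] ivalM_mul[symmetric] inv_chk ivalM_I)
lemma ivalM_R2i: "p \<in> {4,5} \<Longrightarrow> ivalM p (R2ir p) = matrix_inv (R2 p rhoS2 1 1)"
  by (rule inv_unique[symmetric]) (simp_all add: ivalM_R2[symmetric] ivalM_mul[symmetric] inv_chk ivalM_I)
lemma ivalM_R3i: "p \<in> {4,5} \<Longrightarrow> ivalM p (R3ir p) = matrix_inv (R3 p rhoS2 1 1)"
  by (rule inv_unique[symmetric]) (simp_all add: ivalM_R3[symmetric] ivalM_mul[symmetric] inv_chk ivalM_I)

lemma ival_two: "ival p (R8 2 0 0 0 0 0 0 0) = 2"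
  by (simp add: ival_def)

lemma ivalM_H: "p \<in> {4,5} \<Longrightarrow> ivalM p (Hr p) = Hmat p rhoS2 1 1"
  by (simp add: Hmat_def Let_def Hr_def alr_def cr_def ubr_def ival_ur ival_rhor ival_two
      power2_eq_square power3_eq_cube mult.assoc)

lemma gen_facts:
  assumes p: "p \<in> {4,5}"
  defines "H \<equiv> Hmat p rhoS2 1 1"
  shows "adjM (R1 p rhoS2 1 1) ** H ** R1 p rhoS2 1 1 = H"
    "adjM (R2 p rhoS2 1 1) ** H ** R2 p rhoS2 1 1 = H"
    "adjM (R3 p rhoS2 1 1) ** H ** R3 p rhoS2 1 1 = H"
    "adjM (matrix_inv (R1 p rhoS2 1 1)) ** H ** matrix_inv (R1 p rhoS2 1 1) = H"
    "adjM (matrix_inv (R2 p rhoS2 1 1)) ** H ** matrix_inv (R2 p rhoS2 1 1) = H"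
    "adjM (matrix_inv (R3 p rhoS2 1 1)) ** H ** matrix_inv (R3 p rhoS2 1 1) = H"
    "R1 p rhoS2 1 1 ** matrix_inv (R1 p rhoS2 1 1) = mat 1"
    "matrix_inv (R1 p rhoS2 1 1) ** R1 p rhoS2 1 1 = mat 1"
    "R2 p rhoS2 1 1 ** matrix_inv (R2 p rhoS2 1 1) = mat 1"
    "matrix_inv (R2 p rhoS2 1 1) ** R2 p rhoS2 1 1 = mat 1"
    "R3 p rhoS2 1 1 ** matrix_inv (R3 p rhoS2 1 1) = mat 1"
    "matrix_inv (R3 p rhoS2 1 1) ** R3 p rhoS2 1 1 = mat 1"
proof -
  have u: "adjM (ivalM p X) ** ivalM p (Hr p) ** ivalM p X = ivalM p (Hr p)"
    if "mmul p (mmul p (madj p X) (Hr p)) X = Hr p" for X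
    using arg_cong[OF that, of "ivalM p"] by (simp add: ivalM_mul ivalM_adj)
  have i: "ivalM p X ** ivalM p Y = mat 1" if "mmul p X Y = m3I" for X Y
    using arg_cong[OF that, of "ivalM p"] by (simp add: ivalM_mul ivalM_I)
  note e = ivalM_R1[OF p] ivalM_R2[OF p] ivalM_R3[OF p] ivalM_R1i[OF p] ivalM_R2i[OF p] ivalM_R3i[OF p] ivalM_H[OF p]
  show "adjM (R1 p rhoS2 1 1) ** H ** R1 p rhoS2 1 1 = H" using u[OF unit_chk(1)[OF p]] unfolding e H_def .
  show "adjM (R2 p rhoS2 1 1) ** H ** R2 p rhoS2 1 1 = H" using u[OF unit_chk(2)[OF p]] unfolding e H_def .
  show "adjM (R3 p rhoS2 1 1) ** H ** R3 p rhoS2 1 1 = H" using u[OF unit_chk(3)[OF p]] unfolding e H_def .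
  show "adjM (matrix_inv (R1 p rhoS2 1 1)) ** H ** matrix_inv (R1 p rhoS2 1 1) = H" using u[OF unit_chk(4)[OF p]] unfolding e H_def .
  show "adjM (matrix_inv (R2 p rhoS2 1 1)) ** H ** matrix_inv (R2 p rhoS2 1 1) = H" using u[OF unit_chk(5)[OF p]] unfolding e H_def .
  show "adjM (matrix_inv (R3 p rhoS2 1 1)) ** H ** matrix_inv (R3 p rhoS2 1 1) = H" using u[OF unit_chk(6)[OF p]] unfolding e H_def .
  show "R1 p rhoS2 1 1 ** matrix_inv (R1 p rhoS2 1 1) = mat 1" using i[OF inv_chk(1)[OF p]] unfolding e .
  show "matrix_inv (R1 p rhoS2 1 1) ** R1 p rhoS2 1 1 = mat 1" using i[OF inv_chk(2)[OF p]] unfolding e .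
  show "R2 p rhoS2 1 1 ** matrix_inv (R2 p rhoS2 1 1) = mat 1" using i[OF inv_chk(3)[OF p]] unfolding e .
  show "matrix_inv (R2 p rhoS2 1 1) ** R2 p rhoS2 1 1 = mat 1" using i[OF inv_chk(4)[OF p]] unfolding e .
  show "R3 p rhoS2 1 1 ** matrix_inv (R3 p rhoS2 1 1) = mat 1" using i[OF inv_chk(5)[OF p]] unfolding e .
  show "matrix_inv (R3 p rhoS2 1 1) ** R3 p rhoS2 1 1 = mat 1" using i[OF inv_chk(6)[OF p]] unfolding e .
qed

lemma ivalM_grep: "p \<in> {4,5} \<Longrightarrow> ivalM p (grep p ch) = gmat p ch"
  by (simp add: grep_def gmat_def ivalM_R1 ivalM_R2 ivalM_R3 ivalM_R1i ivalM_R2i ivalM_R3i ivalM_I)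

lemma ivalM_wev: "p \<in> {4,5} \<Longrightarrow> ivalM p (wev p w) = cw p w"
  by (induction w) (simp_all add: ivalM_I ivalM_mul ivalM_grep)

lemma cw_eq: "p \<in> {4,5} \<Longrightarrow> wev p v = wev p w \<Longrightarrow> cw p v = cw p w"
  by (metis ivalM_wev)

lemma cw_append: "cw p (v @ w) = cw p v ** cw p w"
  by (induction v) (simp_all add: matrix_mul_assoc)

lemma cw_in: "cw p w \<in> TGroup p rhoS2 1 1"
proof (induction w)
  case Nil
  then show ?case by (simp add: TGroup_def gen_one)
next
  case (Cons ch w)
  have "gmat p ch \<in> TGroup p rhoS2 1 1"
    unfolding gmat_def TGroup_def by (auto intro: gen_grp.intros)
  then show ?case using Cons by (simp add: TGroup_def gen_mult)
qed

lemma adjM_mult: "adjM (a ** b) = adjM b ** adjM a"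
  by (simp add: adjM_def vec_eq_iff matrix_matrix_mult_def sum_3 mult.commute)

lemma adjM_one: "adjM (mat 1) = mat 1"
  by (simp add: adjM_def vec_eq_iff mat_def)

lemma grp_props:
  assumes "p \<in> {4,5}" "g \<in> TGroup p rhoS2 1 1"
  shows "(\<exists>g' \<in> TGroup p rhoS2 1 1. g ** g' = mat 1 \<and> g' ** g = mat 1)
         \<and> adjM g ** Hmat p rhoS2 1 1 ** g = Hmat p rhoS2 1 1"
  using assms(2) unfolding TGroup_def
proof (induction rule: gen_grp.induct)
  case gen_one
  then show ?case by (auto intro: gen_grp.gen_one simp: adjM_one)
next
  case (gen_elem g)
  let ?S = "{R1 p rhoS2 1 1, R2 p rhoS2 1 1, R3 p rhoS2 1 1}"
  from gen_elem show ?case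
    using gen_facts[OF assms(1)] gen_grp.gen_inv[of _ ?S] by auto
next
  case (gen_inv g)
  let ?S = "{R1 p rhoS2 1 1, R2 p rhoS2 1 1, R3 p rhoS2 1 1}"
  from gen_inv show ?case
    using gen_facts[OF assms(1)] gen_grp.gen_elem[of _ ?S] by auto
next
  case (gen_mult a b)
  from gen_mult.IH obtain a' b' where
    a': "a' \<in> gen_grp {R1 p rhoS2 1 1, R2 p rhoS2 1 1, R3 p rhoS2 1 1}" "a ** a' = mat 1" "a' ** a = mat 1"
    and b': "b' \<in> gen_grp {R1 p rhoS2 1 1, R2 p rhoS2 1 1, R3 p rhoS2 1 1}" "b ** b' = mat 1" "b' ** b = mat 1"
    by blast
  have ua: "adjM a ** Hmat p rhoS2 1 1 ** a = Hmat p rhoS2 1 1"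
   and ub: "adjM b ** Hmat p rhoS2 1 1 ** b = Hmat p rhoS2 1 1" using gen_mult.IH by blast+
  have "(a ** b) ** (b' ** a') = a ** (b ** b') ** a'" by (simp add: matrix_mul_assoc)
  then have 1: "(a ** b) ** (b' ** a') = mat 1" using a' b' by simp
  have "(b' ** a') ** (a ** b) = b' ** (a' ** a) ** b" by (simp add: matrix_mul_assoc)
  then have 2: "(b' ** a') ** (a ** b) = mat 1" using a' b' by simp
  have "adjM (a ** b) ** Hmat p rhoS2 1 1 ** (a ** b) = adjM b ** (adjM a ** Hmat p rhoS2 1 1 ** a) ** b"
    by (simp add: adjM_mult matrix_mul_assoc)
  then have 3: "adjM (a ** b) ** Hmat p rhoS2 1 1 ** (a ** b) = Hmat p rhoS2 1 1" using ua ub by simp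
  show ?case using 1 2 3 a'(1) b'(1) by (blast intro: gen_grp.gen_mult)
qed



lemma word_chk:
  assumes "p \<in> {4,5}"
  shows
  "wev p (wy @ ''a'') = wev p (''a'' @ wy)"
  "wev p (wY @ ''a'') = wev p (''a'' @ wY)"
  "wev p (''A'' @ ''a'') = wev p (''a'' @ ''A'')"
  "wev p (wx @ warefl) = wev p (warefl @ wx)"
  "wev p (wX @ warefl) = wev p (warefl @ wX)"
  "wev p ''c'' = wev p (concat [''A'', wx, wy, wX, wY, wX, ''a''])"
  "wev p ''C'' = wev p (concat [''A'', wx, wy, wx, wY, wX, ''a''])"
  "wev p ''b'' = wev p (concat [''A'', wx, wy, wX, wY, wX, ''a'', wX, ''A'', wx, wy, wx, wY, wX, ''a''])"
  "wev p ''B'' = wev p (concat [''A'', wx, wy, wX, wY, wX, ''a'', wx, ''A'', wx, wy, wx, wY, wX, ''a''])"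
  using assms word_chk4 word_chk5 by auto

lemma mv_scale: "(g::cmat) *v (c *s X) = c *s (g *v X)"
  by (simp add: vec_eq_iff matrix_vector_mult_def sum_distrib_left mult.left_commute)

lemma stab_mem:
  assumes p: "p \<in> {4,5}" and g: "g \<in> TGroup p rhoS2 1 1" and c: "g ** R = R ** g"
  shows "g \<in> Stab (TGroup p rhoS2 1 1) (mirror (Hmat p rhoS2 1 1) R)"
proof -
  let ?G = "TGroup p rhoS2 1 1"
  let ?H = "Hmat p rhoS2 1 1"
  have pres: "hform ?H (h *v X) (h *v X) = hform ?H X X" if "h \<in> ?G" for h X
    using grp_props[OF p that] hform_mult[of ?H h X X] by simp
  have into: "h *v X \<in> mirror ?H R" if "h \<in> ?G" "h ** R = R ** h" "X \<in> mirror ?H R" for h X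
  proof -
    from that(3) obtain c where neg: "Re (hform ?H X X) < 0" and e: "R *v X = c *s X"
      unfolding mirror_def by blast
    have "R *v (h *v X) = (R ** h) *v X" by (simp add: matrix_vector_mul_assoc)
    also have "\<dots> = (h ** R) *v X" using that(2) by simp
    also have "\<dots> = h *v (R *v X)" by (simp add: matrix_vector_mul_assoc)
    also have "\<dots> = c *s (h *v X)" using e by (simp add: mv_scale)
    finally show ?thesis unfolding mirror_def using neg pres[OF that(1)] by auto
  qed
  obtain g' where g': "g' \<in> ?G" "g ** g' = mat 1" "g' ** g = mat 1"
    using grp_props[OF p g] by blast
  have c': "g' ** R = R ** g'"
  proof -
    have "g' ** R = g' ** R ** (g ** g')" using g' by simp
    also have "\<dots> = g' ** (R ** g) ** g'" by (simp add: matrix_mul_assoc)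
    also have "\<dots> = g' ** (g ** R) ** g'" using c by simp
    also have "\<dots> = (g' ** g) ** R ** g'" by (simp add: matrix_mul_assoc)
    also have "\<dots> = R ** g'" using g' by simp
    finally show ?thesis .
  qed
  have "(\<lambda>X. g *v X) ` mirror ?H R = mirror ?H R"
  proof
    show "(\<lambda>X. g *v X) ` mirror ?H R \<subseteq> mirror ?H R" using into[OF g c] by auto
    show "mirror ?H R \<subseteq> (\<lambda>X. g *v X) ` mirror ?H R"
    proof
      fix X assume X: "X \<in> mirror ?H R"
      have "X = g *v (g' *v X)" using g' by (simp add: matrix_vector_mul_assoc)
      moreover have "g' *v X \<in> mirror ?H R" using into[OF g'(1) c' X] .
      ultimately show "X \<in> (\<lambda>X. g *v X) ` mirror ?H R" by blast
    qed
  qed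
  then show ?thesis unfolding Stab_def using g by blast
qed

lemma prod_in: "(\<forall>t \<in> set ts. cw p t \<in> S) \<Longrightarrow> cw p (concat ts) \<in> gen_grp S"
proof (induction ts)
  case Nil
  then show ?case by (simp add: gen_one)
next
  case (Cons t ts)
  then show ?case by (simp add: cw_append gen_mult gen_elem)
qed

lemma cw_a: "cw p ''a'' = R1 p rhoS2 1 1" by (simp add: gmat_def)

lemma cw_arefl: "cw p warefl =
   (let M = R1 p rhoS2 1 1 ** R2 p rhoS2 1 1 ** R3 p rhoS2 1 1 ** matrix_inv (R2 p rhoS2 1 1)
    in M ** M ** M ** M ** M)"
proof -
  have w: "warefl = ''abcB'' @ ''abcB'' @ ''abcB'' @ ''abcB'' @ ''abcB''" by (simp add: warefl_def)
  have "cw p warefl = cw p ''abcB'' ** cw p ''abcB'' ** cw p ''abcB'' ** cw p ''abcB'' ** cw p ''abcB''"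
    unfolding w cw_append by (simp only: matrix_mul_assoc)
  moreover have "cw p ''abcB'' = R1 p rhoS2 1 1 ** R2 p rhoS2 1 1 ** R3 p rhoS2 1 1 ** matrix_inv (R2 p rhoS2 1 1)"
    by (simp add: gmat_def matrix_mul_assoc)
  ultimately show ?thesis by (simp add: Let_def)
qed

lemma main_generic:
  assumes p: "p \<in> {4,5}"
  defines "G \<equiv> TGroup p rhoS2 1 1" and "Hm \<equiv> Hmat p rhoS2 1 1" and "Ar \<equiv> cw p warefl"
  shows "gen_grp (Stab G (mirror Hm (R1 p rhoS2 1 1)) \<union> Stab G (mirror Hm Ar)) = G"
proof -
  let ?S = "Stab G (mirror Hm (R1 p rhoS2 1 1)) \<union> Stab G (mirror Hm Ar)"
  have comm1: "cw p t ** R1 p rhoS2 1 1 = R1 p rhoS2 1 1 ** cw p t"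
    if "wev p (t @ ''a'') = wev p (''a'' @ t)" for t
    using cw_eq[OF p that] by (simp only: cw_append cw_a)
  have commA: "cw p t ** Ar = Ar ** cw p t"
    if "wev p (t @ warefl) = wev p (warefl @ t)" for t
    using cw_eq[OF p that] by (simp only: cw_append Ar_def)
  have s1: "cw p t \<in> ?S" if "wev p (t @ ''a'') = wev p (''a'' @ t)" for t
    using stab_mem[OF p cw_in comm1[OF that]] unfolding G_def Hm_def by blast
  have sA: "cw p t \<in> ?S" if "wev p (t @ warefl) = wev p (warefl @ t)" for t
    using stab_mem[OF p cw_in commA[OF that]] unfolding G_def Hm_def by blast
  have ta: "cw p ''a'' \<in> ?S" by (rule s1) simp
  have tA: "cw p ''A'' \<in> ?S" by (rule s1) (rule word_chk(3)[OF p])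
  have ty: "cw p wy \<in> ?S" by (rule s1) (rule word_chk(1)[OF p])
  have tY: "cw p wY \<in> ?S" by (rule s1) (rule word_chk(2)[OF p])
  have tx: "cw p wx \<in> ?S" by (rule sA) (rule word_chk(4)[OF p])
  have tX: "cw p wX \<in> ?S" by (rule sA) (rule word_chk(5)[OF p])
  note toks = ta tA ty tY tx tX
  have c_in: "cw p ''c'' \<in> gen_grp ?S"
    unfolding cw_eq[OF p word_chk(6)[OF p]] by (rule prod_in) (simp only: list.set ball_simps insert_iff empty_iff toks simp_thms)
  have C_in: "cw p ''C'' \<in> gen_grp ?S"
    unfolding cw_eq[OF p word_chk(7)[OF p]] by (rule prod_in) (simp only: list.set ball_simps insert_iff empty_iff toks simp_thms)
  have b_in: "cw p ''b'' \<in> gen_grp ?S"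
    unfolding cw_eq[OF p word_chk(8)[OF p]] by (rule prod_in) (simp only: list.set ball_simps insert_iff empty_iff toks simp_thms)
  have B_in: "cw p ''B'' \<in> gen_grp ?S"
    unfolding cw_eq[OF p word_chk(9)[OF p]] by (rule prod_in) (simp only: list.set ball_simps insert_iff empty_iff toks simp_thms)
  have a_in: "cw p ''a'' \<in> gen_grp ?S" by (rule gen_elem) (rule ta)
  have A_in: "cw p ''A'' \<in> gen_grp ?S" by (rule gen_elem) (rule tA)
  have SG: "?S \<subseteq> G" unfolding Stab_def by auto
  show ?thesis
  proof
    show "gen_grp ?S \<subseteq> G"
    proof
      fix g assume "g \<in> gen_grp ?S"
      then show "g \<in> G"
      proof (induction rule: gen_grp.induct)
        case gen_one
        then show ?case unfolding G_def TGroup_def by (rule gen_grp.gen_one)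
      next
        case (gen_elem g)
        then show ?case using SG by blast
      next
        case (gen_inv g)
        then have gG: "g \<in> G" using SG by blast
        then obtain g' where "g' \<in> G" "g ** g' = mat 1" "g' ** g = mat 1"
          using grp_props[OF p] unfolding G_def by blast
        then show ?case using inv_unique by metis
      next
        case (gen_mult a b)
        then have "a \<in> G" "b \<in> G" by simp_all
        then show ?case unfolding G_def TGroup_def by (blast intro: gen_grp.gen_mult)
      qed
    qed
    show "G \<subseteq> gen_grp ?S"
    proof
      fix g assume "g \<in> G"
      then have "g \<in> gen_grp {R1 p rhoS2 1 1, R2 p rhoS2 1 1, R3 p rhoS2 1 1}"
        by (simp add: G_def TGroup_def)
      then show "g \<in> gen_grp ?S"
      proof (induction rule: gen_grp.induct)
        case gen_one
        then show ?case by (rule gen_grp.gen_one)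
      next
        case (gen_elem g)
        then show ?case using a_in b_in c_in by (auto simp: gmat_def)
      next
        case (gen_inv g)
        then show ?case using A_in B_in C_in by (auto simp: gmat_def)
      next
        case (gen_mult a b)
        then show ?case by (blast intro: gen_grp.gen_mult)
      qed
    qed
  qed
qed

theorem theorem11p4:
  fixes p :: nat
  assumes "p \<in> {4, 5}"
  defines "\<rho> \<equiv> rhoS2" and "\<sigma> \<equiv> (1::complex)" and "\<tau> \<equiv> (1::complex)"
  defines "\<Gamma> \<equiv> TGroup p \<rho> \<sigma> \<tau>"
      and "H \<equiv> Hmat p \<rho> \<sigma> \<tau>"
  defines "A \<equiv> (let M = R1 p \<rho> \<sigma> \<tau> ** R2 p \<rho> \<sigma> \<tau> ** R3 p \<rho> \<sigma> \<tau>
                           ** matrix_inv (R2 p \<rho> \<sigma> \<tau>)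
               in M ** M ** M ** M ** M)"
  shows "gen_grp (Stab \<Gamma> (mirror H (R1 p \<rho> \<sigma> \<tau>)) \<union> Stab \<Gamma> (mirror H A)) = \<Gamma>"
  using main_generic[OF assms(1)] unfolding \<Gamma>_def H_def A_def \<rho>_def \<sigma>_def \<tau>_def cw_arefl .

end
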